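(* For every 3-periodic of $\mathcal{E}$, the interior angles $\theta^\dagger_{1,1},\theta^\dagger_{1,2},\theta^\dagger_{1,3}$ of the focus-inversive triangle satisfy \[\sum_{i=1}^3\cos\theta^\dagger_{1,i}=\frac{\delta\,(a^2+c^2-\delta)}{a^2c^2};\] in particular this sum is invariant over the family (and independent of $\rho$).
   Context: Let $a>b>0$ and let $\mathcal{E}$ be the ellipse $x^2/a^2+y^2/b^2=1$. Set $c=\sqrt{a^2-b^2}$, $\delta=\sqrt{a^4-a^2b^2+b^4}$, and let the foci be $f_1=(-c,0)$, $f_2=(c,0)$. A 3-periodic is a triangle $P_1P_2P_3$ with vertices on $\mathcal{E}$ such that at each vertex the normal to $\mathcal{E}$ bisects the angle formed by the two sides meeting at that vertex; these form a one-parameter family (one through every point of $\mathcal{E}$). Fix $\rho>0$; the focus-inversive triangle has vertices $P_i^\dagger=f_1+(\rho/d_{1,i})^2(P_i-f_1)$, $d_{1,i}=|P_i-f_1|$. *)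

theory Defs
  imports "HOL-Analysis.Analysis"
begin

type_synonym pt = "real \<times> real"

definition on_ellipse :: "real \<Rightarrow> real \<Rightarrow> pt \<Rightarrow> bool" where
  "on_ellipse a b P \<longleftrightarrow> (fst P)\<^sup>2 / a\<^sup>2 + (snd P)\<^sup>2 / b\<^sup>2 = 1"

definition ell_normal :: "real \<Rightarrow> real \<Rightarrow> pt \<Rightarrow> pt" where
  "ell_normal a b P = (fst P / a\<^sup>2, snd P / b\<^sup>2)"

definition vangle :: "pt \<Rightarrow> pt \<Rightarrow> real" where
  "vangle u v = arccos ((u \<bullet> v) / (norm u * norm v))"

definition tri_angle :: "pt \<Rightarrow> pt \<Rightarrow> pt \<Rightarrow> real" where
  "tri_angle A B C = vangle (B - A) (C - A)"

definition normal_bisects :: "real \<Rightarrow> real \<Rightarrow> pt \<Rightarrow> pt \<Rightarrow> pt \<Rightarrow> bool" where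
  "normal_bisects a b P Q R \<longleftrightarrow>
     vangle (ell_normal a b P) (Q - P) = vangle (ell_normal a b P) (R - P)"

definition three_periodic :: "real \<Rightarrow> real \<Rightarrow> pt \<Rightarrow> pt \<Rightarrow> pt \<Rightarrow> bool" where
  "three_periodic a b P1 P2 P3 \<longleftrightarrow>
     on_ellipse a b P1 \<and> on_ellipse a b P2 \<and> on_ellipse a b P3 \<and>
     P1 \<noteq> P2 \<and> P2 \<noteq> P3 \<and> P1 \<noteq> P3 \<and>
     normal_bisects a b P1 P2 P3 \<and> normal_bisects a b P2 P3 P1 \<and>
     normal_bisects a b P3 P1 P2"

definition circ_inv :: "pt \<Rightarrow> real \<Rightarrow> pt \<Rightarrow> pt" where
  "circ_inv f \<rho> P = f + (\<rho> / dist P f)\<^sup>2 *\<^sub>R (P - f)"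

end

theory Submission
  imports Defs
begin

lemma cs_bound:
  fixes u v :: "real \<times> real"
  shows "\<bar>inner u v / (norm u * norm v)\<bar> \<le> 1"
proof (cases "norm u * norm v = 0")
  case True
  show ?thesis unfolding True by simp
next
  case False
  hence p: "norm u * norm v > 0" by (simp add: less_le)
  have h: "\<bar>inner u v\<bar> \<le> norm u * norm v" by (rule Cauchy_Schwarz_ineq2)
  have "\<bar>inner u v / (norm u * norm v)\<bar> = \<bar>inner u v\<bar> / (norm u * norm v)"
    using p by (simp add: abs_divide)
  also have "\<dots> \<le> 1" using h p by (simp add: divide_le_eq)
  finally show ?thesis .
qed

lemma vangle_cos:
  fixes u v :: "real \<times> real"
  shows "cos (vangle u v) = inner u v / (norm u * norm v)"
proof -
  have h: "\<bar>inner u v / (norm u * norm v)\<bar> \<le> 1" by (rule cs_bound)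
  have "- 1 \<le> inner u v / (norm u * norm v)" "inner u v / (norm u * norm v) \<le> 1"
    using h by arith+
  thus ?thesis unfolding vangle_def by (intro cos_arccos)
qed

lemma norm_comb2:
  fixes u v :: "'a::real_inner"
  shows "norm (x *\<^sub>R u - y *\<^sub>R v) ^ 2 = x^2 * norm u ^ 2 + y^2 * norm v ^ 2 - 2 * x * y * inner u v"
proof -
  have "norm (x *\<^sub>R u - y *\<^sub>R v) ^ 2 = inner (x *\<^sub>R u - y *\<^sub>R v) (x *\<^sub>R u - y *\<^sub>R v)"
    by (simp only: power2_norm_eq_inner)
  also have "\<dots> = x*x*inner u u + y*y*inner v v - 2*x*y*inner u v"
    by (simp add: inner_diff_left inner_diff_right inner_commute[of v u] algebra_simps)
  also have "\<dots> = x^2 * norm u ^ 2 + y^2 * norm v ^ 2 - 2 * x * y * inner u v"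
    by (simp only: dot_square_norm power2_eq_square)
  finally show ?thesis .
qed

lemma cos_tri_angle:
  fixes A B C :: "real \<times> real"
  shows "cos (tri_angle A B C) = (dist A B ^ 2 + dist A C ^ 2 - dist B C ^ 2) / (2 * dist A B * dist A C)"
proof -
  have "B - C = (B - A) - (C - A)" by simp
  hence e: "norm (B - C) ^ 2 = norm (B - A) ^ 2 + norm (C - A) ^ 2 - 2 * inner (B - A) (C - A)"
    using norm_comb2[of 1 "B - A" 1 "C - A"] by simp
  have d1: "dist A B = norm (B - A)" by (simp add: dist_norm norm_minus_commute)
  have d2: "dist A C = norm (C - A)" by (simp add: dist_norm norm_minus_commute)
  have d3: "dist B C = norm (B - C)" by (simp add: dist_norm)
  have n: "norm (B - A) ^ 2 + norm (C - A) ^ 2 - (norm (B - A) ^ 2 + norm (C - A) ^ 2 - 2 * inner (B - A) (C - A))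
      = 2 * inner (B - A) (C - A)" by simp
  show ?thesis unfolding tri_angle_def vangle_cos d1 d2 d3 e n by simp
qed

lemma aux1: fixes r nu nv w :: real assumes "nu \<noteq> 0" "nv \<noteq> 0"
  shows "((r/nu)^2)^2 * nu^2 + ((r/nv)^2)^2*nv^2 - 2*(r/nu)^2*(r/nv)^2*w = r^4*(nu^2+nv^2-2*w)/(nu^2*nv^2)"
  using assms by (simp add: field_simps power2_eq_square power4_eq_xxxx)

lemma inv_dist:
  fixes f P R :: "real \<times> real"
  assumes "P \<noteq> f" "R \<noteq> f"
  shows "dist (circ_inv f \<rho> P) (circ_inv f \<rho> R) = \<rho>^2 * dist P R / (dist P f * dist R f)"
proof -
  define u where "u = P - f"
  define v where "v = R - f"
  have du: "norm u > 0" using assms(1) by (simp add: u_def)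
  have dv: "norm v > 0" using assms(2) by (simp add: v_def)
  have dP: "dist P f = norm u" by (simp add: u_def dist_norm)
  have dR: "dist R f = norm v" by (simp add: v_def dist_norm)
  have dPR: "dist P R = norm (u - v)" by (simp add: u_def v_def dist_norm)
  have diff: "circ_inv f \<rho> P - circ_inv f \<rho> R = (\<rho> / norm u)^2 *\<^sub>R u - (\<rho> / norm v)^2 *\<^sub>R v"
    by (simp add: circ_inv_def dP dR u_def[symmetric] v_def[symmetric])
  have sq: "norm ((\<rho> / norm u)^2 *\<^sub>R u - (\<rho> / norm v)^2 *\<^sub>R v) ^ 2
      = (\<rho>^2 * norm (u - v) / (norm u * norm v)) ^ 2"
  proof -
    have "norm ((\<rho> / norm u)^2 *\<^sub>R u - (\<rho> / norm v)^2 *\<^sub>R v) ^ 2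
       = ((\<rho> / norm u)^2)^2 * norm u ^ 2 + ((\<rho> / norm v)^2)^2 * norm v ^ 2
         - 2 * (\<rho> / norm u)^2 * (\<rho> / norm v)^2 * inner u v"
      by (rule norm_comb2)
    also have "\<dots> = \<rho>^4 * (norm u ^ 2 + norm v ^ 2 - 2 * inner u v) / (norm u ^ 2 * norm v ^ 2)"
      using du dv aux1[of "norm u" "norm v" \<rho> "inner u v"] by simp
    also have "norm u ^ 2 + norm v ^ 2 - 2 * inner u v = norm (u - v) ^ 2"
      using norm_comb2[of 1 u 1 v] by simp
    also have "\<rho>^4 * norm (u - v) ^ 2 / (norm u ^ 2 * norm v ^ 2) = (\<rho>^2 * norm (u - v) / (norm u * norm v)) ^ 2"
      by (simp add: power_divide power_mult_distrib)
    finally show ?thesis .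
  qed
  have "norm ((\<rho> / norm u)^2 *\<^sub>R u - (\<rho> / norm v)^2 *\<^sub>R v) = \<rho>^2 * norm (u - v) / (norm u * norm v)"
    by (rule power2_eq_imp_eq[OF sq]) (use du dv in auto)
  moreover have "dist (circ_inv f \<rho> P) (circ_inv f \<rho> R) = norm ((\<rho> / norm u)^2 *\<^sub>R u - (\<rho> / norm v)^2 *\<^sub>R v)"
    by (simp only: dist_norm diff)
  ultimately show ?thesis unfolding dP dR dPR by simp
qed


lemma unit_sq:
  fixes X Y :: real assumes "X^2 + Y^2 = 1"
  shows "(Complex X Y)^2 + 1 = 2 * complex_of_real X * Complex X Y"
  using assms by (simp add: complex_eq_iff power2_eq_square algebra_simps)

lemma unit_diff_sq:
  fixes X Y X' Y' :: real assumes "X^2 + Y^2 = 1" "X'^2 + Y'^2 = 1"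
  shows "(Complex X Y - Complex X' Y')^2 = - 2 * Complex X Y * Complex X' Y' * complex_of_real (1 - X*X' - Y*Y')"
  using assms by (simp add: complex_eq_iff power2_eq_square algebra_simps) algebra+


definition RelZ :: "complex \<Rightarrow> complex \<Rightarrow> complex \<Rightarrow> complex \<Rightarrow> complex" where
  "RelZ k g z w = z^2 + w^2 - k*(z^2*w^2 + 1) - 2*g*z*w"

lemma RelZ_sym: "RelZ k g z w = RelZ k g w z"
  unfolding RelZ_def by (simp add: algebra_simps)

lemma relR:
  fixes X Y X' Y' k g :: real
  assumes "X^2 + Y^2 = 1" "X'^2 + Y'^2 = 1" "(1-k)*X*X' + (1+k)*Y*Y' = g"
  shows "RelZ (of_real k) (of_real g) (Complex X Y) (Complex X' Y') = 0"
  using assms unfolding RelZ_def by (simp add: complex_eq_iff power2_eq_square algebra_simps) algebra+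

lemma EF:
  fixes z1 z2 z3 k g :: complex
  assumes "RelZ k g z1 z2 = 0" "RelZ k g z1 z3 = 0" "z2 \<noteq> z3"
  shows "(z2+z3)*(1-k*z1^2) = 2*g*z1" "z2*z3*(1-k*z1^2) = z1^2-k"
proof -
  have "(z2-z3)*((z2+z3)*(1-k*z1^2) - 2*g*z1) = 0"
    using assms(1,2) unfolding RelZ_def by algebra
  thus e: "(z2+z3)*(1-k*z1^2) = 2*g*z1" using assms(3) by simp
  show "z2*z3*(1-k*z1^2) = z1^2-k" using e assms(1) unfolding RelZ_def by algebra
qed

lemma vieta:
  fixes z1 z2 z3 k g :: complex
  assumes r12: "RelZ k g z1 z2 = 0" and r13: "RelZ k g z1 z3 = 0" and r23: "RelZ k g z2 z3 = 0"
    and d12: "z1 \<noteq> z2" and d13: "z1 \<noteq> z3" and d23: "z2 \<noteq> z3" and nz: "z1 \<noteq> 0"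
  shows "z1+z2+z3 = -k*(z1*z2*z3)" "z1*z2+z1*z3+z2*z3 = -k" "2*g = k^2-1"
proof -
  have r21: "RelZ k g z2 z1 = 0" using r12 RelZ_sym by metis
  have r31: "RelZ k g z3 z1 = 0" using r13 RelZ_sym by metis
  have r32: "RelZ k g z3 z2 = 0" using r23 RelZ_sym by metis
  note F1 = EF[OF r12 r13 d23]
  note F2 = EF[OF r21 r23 d13]
  note F3 = EF[OF r31 r32 d12]
  define e3 where "e3 = z1*z2*z3"
  have C1: "z1^3 + k*e3*z1^2 - k*z1 - e3 = 0" using F1(2) unfolding e3_def by algebra
  have C2: "z2^3 + k*e3*z2^2 - k*z2 - e3 = 0" using F2(2) unfolding e3_def by algebra
  have C3: "z3^3 + k*e3*z3^2 - k*z3 - e3 = 0" using F3(2) unfolding e3_def by algebra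
  have "(z1-z2)*(z1^2+z1*z2+z2^2 + k*e3*(z1+z2) - k) = 0" using C1 C2 by algebra
  hence H12: "z1^2+z1*z2+z2^2 + k*e3*(z1+z2) - k = 0" using d12 by simp
  have "(z1-z3)*(z1^2+z1*z3+z3^2 + k*e3*(z1+z3) - k) = 0" using C1 C3 by algebra
  hence H13: "z1^2+z1*z3+z3^2 + k*e3*(z1+z3) - k = 0" using d13 by simp
  have "(z2-z3)*(z1+z2+z3+k*e3) = 0" using H12 H13 by algebra
  hence "z1+z2+z3+k*e3 = 0" using d23 by simp
  hence E1: "z1+z2+z3 = -k*e3" by algebra
  thus "z1+z2+z3 = -k*(z1*z2*z3)" by (simp add: e3_def)
  show E2: "z1*z2+z1*z3+z2*z3 = -k" using H12 E1 by algebra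
  have "z1*(2*g - (k^2-1)) = 0" using F1(1) E1 C1 by algebra
  thus "2*g = k^2-1" using nz by simp
qed


lemma vtx_sp:
  fixes z s p k a c :: complex
  assumes hs: "s * (1 - k*z^2) = (k^2-1)*z" and hp: "p*(1-k*z^2) = z^2 - k"
   and hD: "1 - k*z^2 \<noteq> 0" and hr: "c^2*k^2 + 2*(2*a^2-c^2)*k - 3*c^2 = 0" and hc: "c \<noteq> 0"
  shows "((2*z^2*a* s + z^2*c* s^2 - 2*z^2*c*p + 2*z^2*c - 8*z*a*p - 2*z*c* s*p - 2*z*c* s + 2*a* s*p + c* s^2 + 2*c*p^2 - 2*c*p)^2 - 2*(4*z^4*a^2*p + 2*z^4*a*c* s*p + 2*z^4*a*c* s + z^4*c^2* s^2 + z^4*c^2*p^2 - 2*z^4*c^2*p + z^4*c^2 - 8*z^3*a^2* s*p - 4*z^3*a*c* s^2*p - 4*z^3*a*c* s^2 - 2*z^3*c^2* s^3 - 2*z^3*c^2* s*p^2 + 4*z^3*c^2* s*p - 2*z^3*c^2* s + 4*z^2*a^2* s^2*p + 8*z^2*a^2*p^2 + 2*z^2*a*c* s^3*p + 2*z^2*a*c* s^3 + 4*z^2*a*c* s*p^2 + 4*z^2*a*c* s*p + z^2*c^2* s^4 + z^2*c^2* s^2*p^2 + z^2*c^2* s^2 + 2*z^2*c^2*p^3 - 4*z^2*c^2*p^2 + 2*z^2*c^2*p - 8*z*a^2* s*p^2 - 4*z*a*c* s^2*p^2 - 4*z*a*c* s^2*p - 2*z*c^2* s^3*p - 2*z*c^2*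 s*p^3 + 4*z*c^2* s*p^2 - 2*z*c^2* s*p + 4*a^2*p^3 + 2*a*c* s*p^3 + 2*a*c* s*p^2 + c^2* s^2*p^2 + c^2*p^4 - 2*c^2*p^3 + c^2*p^2) - ((s^2-4*p)*(c*z^2+2*a*z+c))^2)*(2*a*z - c*z^2 - c)*a^2*2 = 2*(4*z^4*a^2*p + 2*z^4*a*c* s*p + 2*z^4*a*c* s + z^4*c^2* s^2 + z^4*c^2*p^2 - 2*z^4*c^2*p + z^4*c^2 - 8*z^3*a^2* s*p - 4*z^3*a*c* s^2*p - 4*z^3*a*c* s^2 - 2*z^3*c^2* s^3 - 2*z^3*c^2* s*p^2 + 4*z^3*c^2* s*p - 2*z^3*c^2* s + 4*z^2*a^2* s^2*p + 8*z^2*a^2*p^2 + 2*z^2*a*c* s^3*p + 2*z^2*a*c* s^3 + 4*z^2*a*c* s*p^2 + 4*z^2*a*c* s*p + z^2*c^2* s^4 + z^2*c^2* s^2*p^2 + z^2*c^2* s^2 + 2*z^2*c^2*p^3 - 4*z^2*c^2*p^2 + 2*z^2*c^2*p - 8*z*a^2* s*p^2 - 4*z*a*c* s^2*p^2 - 4*z*a*c* s^2*p - 2*z*c^2* s^3*p - 2*z*c^2* s*p^3 + 4*z*c^2* s*p^2 - 2*z*c^2* s*p + 4*a^2*p^3 + 2*a*c* s*p^3 + 2*a*c* s*p^2 + c^2* s^2*p^2 + c^2*p^4 - 2*c^2*p^3 + c^2*p^2)*(2*a^3*(1+k)*z - c*(k*c^2+4*a^2-3*c^2)*(z^2+1))"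
  using assms by algebra

lemma vtx_c:
  fixes z1 z2 z3 k a c :: complex
  assumes E: "(z2+z3)*(1-k*z1^2) = (k^2-1)*z1" and F: "z2*z3*(1-k*z1^2) = z1^2-k"
   and hD: "1 - k*z1^2 \<noteq> 0" and hr: "c^2*k^2 + 2*(2*a^2-c^2)*k - 3*c^2 = 0" and hc: "c \<noteq> 0"
  shows "(((z1-z3)^2*(c*z2^2+2*a*z2+c))^2 + ((z1-z2)^2*(c*z3^2+2*a*z3+c))^2 - ((z2-z3)^2*(c*z1^2+2*a*z1+c))^2)*(2*a*z1 - c*z1^2 - c)*a^2*2 = 2*(((z1-z3)^2*(c*z2^2+2*a*z2+c))*((z1-z2)^2*(c*z3^2+2*a*z3+c)))*(2*a^3*(1+k)*z1 - c*(k*c^2+4*a^2-3*c^2)*(z1^2+1))"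
proof -
  define s where "s = z2 + z3"
  define p where "p = z2 * z3"
  have Sm: "((z1-z3)^2*(c*z2^2+2*a*z2+c)) + ((z1-z2)^2*(c*z3^2+2*a*z3+c)) = (2*z1^2*a* s + z1^2*c* s^2 - 2*z1^2*c*p + 2*z1^2*c - 8*z1*a*p - 2*z1*c* s*p - 2*z1*c* s + 2*a* s*p + c* s^2 + 2*c*p^2 - 2*c*p)"
    unfolding s_def p_def by algebra
  have Pr: "((z1-z3)^2*(c*z2^2+2*a*z2+c)) * ((z1-z2)^2*(c*z3^2+2*a*z3+c)) = (4*z1^4*a^2*p + 2*z1^4*a*c* s*p + 2*z1^4*a*c* s + z1^4*c^2* s^2 + z1^4*c^2*p^2 - 2*z1^4*c^2*p + z1^4*c^2 - 8*z1^3*a^2* s*p - 4*z1^3*a*c* s^2*p - 4*z1^3*a*c* s^2 - 2*z1^3*c^2* s^3 - 2*z1^3*c^2* s*p^2 + 4*z1^3*c^2* s*p - 2*z1^3*c^2* s + 4*z1^2*a^2* s^2*p + 8*z1^2*a^2*p^2 + 2*z1^2*a*c* s^3*p + 2*z1^2*a*c* s^3 + 4*z1^2*a*c* s*p^2 + 4*z1^2*a*c* s*p + z1^2*c^2* s^4 + z1^2*c^2* s^2*p^2 + z1^2*c^2* s^2 + 2*z1^2*c^2*p^3 - 4*z1^2*c^2*p^2 + 2*z1^2*c^2*p - 8*z1*a^2* s*p^2 - 4*z1*a*c* s^2*p^2 - 4*z1*a*c* s^2*p - 2*z1*c^2* s^3*p - 2*z1*c^2* s*p^3 + 4*z1*c^2*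 s*p^2 - 2*z1*c^2* s*p + 4*a^2*p^3 + 2*a*c* s*p^3 + 2*a*c* s*p^2 + c^2* s^2*p^2 + c^2*p^4 - 2*c^2*p^3 + c^2*p^2)"
    unfolding s_def p_def by algebra
  have W1: "((z2-z3)^2*(c*z1^2+2*a*z1+c)) = (s^2-4*p)*(c*z1^2+2*a*z1+c)"
    unfolding s_def p_def by algebra
  have sq: "((z1-z3)^2*(c*z2^2+2*a*z2+c))^2 + ((z1-z2)^2*(c*z3^2+2*a*z3+c))^2 = (((z1-z3)^2*(c*z2^2+2*a*z2+c)) + ((z1-z2)^2*(c*z3^2+2*a*z3+c)))^2 - 2*(((z1-z3)^2*(c*z2^2+2*a*z2+c)) * ((z1-z2)^2*(c*z3^2+2*a*z3+c)))" by algebra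
  have m: "((2*z1^2*a* s + z1^2*c* s^2 - 2*z1^2*c*p + 2*z1^2*c - 8*z1*a*p - 2*z1*c* s*p - 2*z1*c* s + 2*a* s*p + c* s^2 + 2*c*p^2 - 2*c*p)^2 - 2*(4*z1^4*a^2*p + 2*z1^4*a*c* s*p + 2*z1^4*a*c* s + z1^4*c^2* s^2 + z1^4*c^2*p^2 - 2*z1^4*c^2*p + z1^4*c^2 - 8*z1^3*a^2* s*p - 4*z1^3*a*c* s^2*p - 4*z1^3*a*c* s^2 - 2*z1^3*c^2* s^3 - 2*z1^3*c^2* s*p^2 + 4*z1^3*c^2* s*p - 2*z1^3*c^2* s + 4*z1^2*a^2* s^2*p + 8*z1^2*a^2*p^2 + 2*z1^2*a*c* s^3*p + 2*z1^2*a*c* s^3 + 4*z1^2*a*c* s*p^2 + 4*z1^2*a*c* s*p + z1^2*c^2* s^4 + z1^2*c^2* s^2*p^2 + z1^2*c^2* s^2 + 2*z1^2*c^2*p^3 - 4*z1^2*c^2*p^2 + 2*z1^2*c^2*p - 8*z1*a^2* s*p^2 - 4*z1*a*c* s^2*p^2 - 4*z1*a*c* s^2*p - 2*z1*c^2* s^3*p - 2*z1*c^2* s*p^3 + 4*z1*c^2* s*p^2 - 2*z1*c^2* s*p + 4*a^2*p^3 + 2*a*c* s*p^3 + 2*a*c* s*p^2 + c^2* s^2*p^2 + c^2*p^4 - 2*c^2*p^3 + c^2*p^2) - ((s^2-4*p)*(c*z1^2+2*a*z1+c))^2)*(2*a*z1 - c*z1^2 - c)*a^2*2 = 2*(4*z1^4*a^2*p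 + 2*z1^4*a*c* s*p + 2*z1^4*a*c* s + z1^4*c^2* s^2 + z1^4*c^2*p^2 - 2*z1^4*c^2*p + z1^4*c^2 - 8*z1^3*a^2* s*p - 4*z1^3*a*c* s^2*p - 4*z1^3*a*c* s^2 - 2*z1^3*c^2* s^3 - 2*z1^3*c^2* s*p^2 + 4*z1^3*c^2* s*p - 2*z1^3*c^2* s + 4*z1^2*a^2* s^2*p + 8*z1^2*a^2*p^2 + 2*z1^2*a*c* s^3*p + 2*z1^2*a*c* s^3 + 4*z1^2*a*c* s*p^2 + 4*z1^2*a*c* s*p + z1^2*c^2* s^4 + z1^2*c^2* s^2*p^2 + z1^2*c^2* s^2 + 2*z1^2*c^2*p^3 - 4*z1^2*c^2*p^2 + 2*z1^2*c^2*p - 8*z1*a^2* s*p^2 - 4*z1*a*c* s^2*p^2 - 4*z1*a*c* s^2*p - 2*z1*c^2* s^3*p - 2*z1*c^2* s*p^3 + 4*z1*c^2* s*p^2 - 2*z1*c^2* s*p + 4*a^2*p^3 + 2*a*c* s*p^3 + 2*a*c* s*p^2 + c^2* s^2*p^2 + c^2*p^4 - 2*c^2*p^3 + c^2*p^2)*(2*a^3*(1+k)*z1 - c*(k*c^2+4*a^2-3*c^2)*(z1^2+1))"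
    by (rule vtx_sp) (use E F hD hr hc in \<open>simp_all add: s_def p_def\<close>)
  show ?thesis using m by (simp only: sq Sm Pr W1)
qed

lemma sum_c:
  fixes z1 z2 z3 k a c :: complex
  assumes "z1+z2+z3 = -k*(z1*z2*z3)" "z1*z2+z1*z3+z2*z3 = -k" "c^2*k^2 + 2*(2*a^2-c^2)*k - 3*c^2 = 0"
  shows "(z1*(c*z2^2-2*a*z2+c)*(c*z3^2-2*a*z3+c) + z2*(c*z1^2-2*a*z1+c)*(c*z3^2-2*a*z3+c) + z3*(c*z1^2-2*a*z1+c)*(c*z2^2-2*a*z2+c))*(c^2*(k+1) - 2*k*a^2)
     = a*k*((c*z1^2-2*a*z1+c)*(c*z2^2-2*a*z2+c)*(c*z3^2-2*a*z3+c))"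
  using assms by algebra


lemma unit_norm: fixes X Y :: real assumes "X^2+Y^2=1" shows "norm (Complex X Y) = 1"
  using assms by (simp add: complex_norm)

lemma unit_nz: fixes X Y :: real assumes "X^2+Y^2=1" shows "Complex X Y \<noteq> 0"
  using unit_norm[OF assms] by auto

lemma q_unit: fixes X Y a c :: real assumes "X^2+Y^2=1"
  shows "of_real c*(Complex X Y)^2 + 2* of_real a*Complex X Y + of_real c = 2*Complex X Y* of_real (a + c*X)"
  using unit_sq[OF assms] by (simp add: algebra_simps) algebra

lemma qt_unit: fixes X Y a c :: real assumes "X^2+Y^2=1"
  shows "of_real c*(Complex X Y)^2 - 2* of_real a*Complex X Y + of_real c = -2*Complex X Y* of_real (a - c*X)"
  using unit_sq[OF assms] by (simp add: algebra_simps) algebra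

lemma closure_real:
  fixes X1 Y1 X2 Y2 X3 Y3 k g :: real
  assumes u1: "X1^2+Y1^2=1" and u2: "X2^2+Y2^2=1" and u3: "X3^2+Y3^2=1"
    and b12: "(1-k)*X1*X2 + (1+k)*Y1*Y2 = g" and b13: "(1-k)*X1*X3 + (1+k)*Y1*Y3 = g"
    and b23: "(1-k)*X2*X3 + (1+k)*Y2*Y3 = g"
    and d12: "(X1,Y1) \<noteq> (X2,Y2)" and d13: "(X1,Y1) \<noteq> (X3,Y3)" and d23: "(X2,Y2) \<noteq> (X3,Y3)"
  shows "2*g = k^2-1"
proof -
  let ?z1 = "Complex X1 Y1" and ?z2 = "Complex X2 Y2" and ?z3 = "Complex X3 Y3"
  have "2*complex_of_real g = (complex_of_real k)^2-1"
    by (rule vieta(3)[OF relR[OF u1 u2 b12] relR[OF u1 u3 b13] relR[OF u2 u3 b23]])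
       (use d12 d13 d23 unit_nz[OF u1] in auto)
  hence "complex_of_real (2*g) = complex_of_real (k^2-1)" by simp
  thus ?thesis using of_real_eq_iff by blast
qed

lemma vertex_real:
  fixes X1 Y1 X2 Y2 X3 Y3 k g a c :: real
  assumes u1: "X1^2+Y1^2=1" and u2: "X2^2+Y2^2=1" and u3: "X3^2+Y3^2=1"
    and b12: "(1-k)*X1*X2 + (1+k)*Y1*Y2 = g" and b13: "(1-k)*X1*X3 + (1+k)*Y1*Y3 = g"
    and b23: "(1-k)*X2*X3 + (1+k)*Y2*Y3 = g"
    and d12: "(X1,Y1) \<noteq> (X2,Y2)" and d13: "(X1,Y1) \<noteq> (X3,Y3)" and d23: "(X2,Y2) \<noteq> (X3,Y3)"
    and rel: "c^2*k^2 + 2*(2*a^2-c^2)*k - 3*c^2 = 0" and hc: "c \<noteq> 0" and k1: "k < 1" and k0: "0 \<le> k"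
  shows "(((a+c*X2)*(1-X1*X3-Y1*Y3))^2 + ((a+c*X3)*(1-X1*X2-Y1*Y2))^2 - ((a+c*X1)*(1-X2*X3-Y2*Y3))^2)*(a - c*X1)*2*a^2
       = 2*(((a+c*X2)*(1-X1*X3-Y1*Y3))*((a+c*X3)*(1-X1*X2-Y1*Y2)))*(a^3*(1+k) - c*(k*c^2+4*a^2-3*c^2)*X1)"
proof -
  define z1 where "z1 = Complex X1 Y1"
  define z2 where "z2 = Complex X2 Y2"
  define z3 where "z3 = Complex X3 Y3"
  define K where "K = complex_of_real k"
  define A where "A = complex_of_real a"
  define C where "C = complex_of_real c"
  have r12: "RelZ K (of_real g) z1 z2 = 0" unfolding z1_def z2_def K_def by (rule relR[OF u1 u2 b12])
  have r13: "RelZ K (of_real g) z1 z3 = 0" unfolding z1_def z3_def K_def by (rule relR[OF u1 u3 b13])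
  have r23: "RelZ K (of_real g) z2 z3 = 0" unfolding z2_def z3_def K_def by (rule relR[OF u2 u3 b23])
  have z12: "z1 \<noteq> z2" "z1 \<noteq> z3" "z2 \<noteq> z3" using d12 d13 d23 by (auto simp: z1_def z2_def z3_def)
  have nz1: "z1 \<noteq> 0" unfolding z1_def by (rule unit_nz[OF u1])
  have nz2: "z2 \<noteq> 0" unfolding z2_def by (rule unit_nz[OF u2])
  have nz3: "z3 \<noteq> 0" unfolding z3_def by (rule unit_nz[OF u3])
  have cl: "2*complex_of_real g = K^2-1" by (rule vieta(3)[OF r12 r13 r23 z12 nz1])
  note ef = EF[OF r12 r13 z12(3)]
  have E: "(z2+z3)*(1-K*z1^2) = (K^2-1)*z1" using ef(1) cl by (simp add: mult.assoc)
  have F: "z2*z3*(1-K*z1^2) = z1^2-K" by (rule ef(2))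
  have D: "1 - K*z1^2 \<noteq> 0"
  proof
    assume "1 - K*z1^2 = 0"
    hence "K*z1^2 = 1" by simp
    hence "norm (K*z1^2) = 1" by simp
    moreover have "norm (K*z1^2) = k" using k0 unit_norm[OF u1]
      by (simp add: K_def z1_def norm_mult norm_power)
    ultimately show False using k1 by simp
  qed
  have relc: "C^2*K^2 + 2*(2*A^2-C^2)*K - 3*C^2 = 0"
  proof -
    have "complex_of_real (c^2*k^2 + 2*(2*a^2-c^2)*k - 3*c^2) = 0" using rel by simp
    thus ?thesis by (simp add: A_def C_def K_def)
  qed
  have hC: "C \<noteq> 0" using hc by (simp add: C_def)
  have main: "(((z1-z3)^2*(C*z2^2+2*A*z2+C))^2 + ((z1-z2)^2*(C*z3^2+2*A*z3+C))^2 - ((z2-z3)^2*(C*z1^2+2*A*z1+C))^2)*(2*A*z1 - C*z1^2 - C)*A^2*2 = 2*(((z1-z3)^2*(C*z2^2+2*A*z2+C))*((z1-z2)^2*(C*z3^2+2*A*z3+C)))*(2*A^3*(1+K)*z1 - C*(K*C^2+4*A^2-3*C^2)*(z1^2+1))"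
    by (rule vtx_c[OF E F D relc hC])
  have q1: "C*z1^2+2*A*z1+C = 2*z1* of_real (a+c*X1)" unfolding z1_def A_def C_def by (rule q_unit[OF u1])
  have q2: "C*z2^2+2*A*z2+C = 2*z2* of_real (a+c*X2)" unfolding z2_def A_def C_def by (rule q_unit[OF u2])
  have q3: "C*z3^2+2*A*z3+C = 2*z3* of_real (a+c*X3)" unfolding z3_def A_def C_def by (rule q_unit[OF u3])
  have t1: "C*z1^2 - 2*A*z1 + C = -2*z1* of_real (a-c*X1)" unfolding z1_def A_def C_def by (rule qt_unit[OF u1])
  have s1: "z1^2+1 = 2* of_real X1*z1" unfolding z1_def by (rule unit_sq[OF u1])
  have m23: "(z2-z3)^2 = -2*z2*z3* of_real (1-X2*X3-Y2*Y3)" unfolding z2_def z3_def by (rule unit_diff_sq[OF u2 u3])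
  have m13: "(z1-z3)^2 = -2*z1*z3* of_real (1-X1*X3-Y1*Y3)" unfolding z1_def z3_def by (rule unit_diff_sq[OF u1 u3])
  have m12: "(z1-z2)^2 = -2*z1*z2* of_real (1-X1*X2-Y1*Y2)" unfolding z1_def z2_def by (rule unit_diff_sq[OF u1 u2])
  define L where "L = (((a+c*X2)*(1-X1*X3-Y1*Y3))^2 + ((a+c*X3)*(1-X1*X2-Y1*Y2))^2 - ((a+c*X1)*(1-X2*X3-Y2*Y3))^2)*(a - c*X1)*2*a^2"
  define R where "R = 2*(((a+c*X2)*(1-X1*X3-Y1*Y3))*((a+c*X3)*(1-X1*X2-Y1*Y2)))*(a^3*(1+k) - c*(k*c^2+4*a^2-3*c^2)*X1)"
  have t1': "2*A*z1 - C*z1^2 - C = 2*z1* of_real (a-c*X1)" using t1 by algebra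
  have "(complex_of_real L - complex_of_real R) * (32*(z1*z2*z3)^2*z1) = 0"
  proof -
    have eL: "complex_of_real L = ((of_real (a+c*X2)* of_real (1-X1*X3-Y1*Y3))^2 + (of_real (a+c*X3)* of_real (1-X1*X2-Y1*Y2))^2 - (of_real (a+c*X1)* of_real (1-X2*X3-Y2*Y3))^2)* of_real (a - c*X1)*2*A^2"
      unfolding L_def A_def by simp
    have eR: "complex_of_real R = 2*((of_real (a+c*X2)* of_real (1-X1*X3-Y1*Y3))*(of_real (a+c*X3)* of_real (1-X1*X2-Y1*Y2)))*(A^3*(1+K) - C*(K*C^2+4*A^2-3*C^2)* of_real X1)"
      unfolding R_def A_def C_def K_def by simp
    have main2: "(((-2*z1*z3* of_real (1-X1*X3-Y1*Y3))*(2*z2* of_real (a+c*X2)))^2 + ((-2*z1*z2* of_real (1-X1*X2-Y1*Y2))*(2*z3* of_real (a+c*X3)))^2 - ((-2*z2*z3* of_real (1-X2*X3-Y2*Y3))*(2*z1* of_real (a+c*X1)))^2)*(2*z1* of_real (a-c*X1))*A^2*2 = 2*(((-2*z1*z3* of_real (1-X1*X3-Y1*Y3))*(2*z2* of_real (a+c*X2)))*((-2*z1*z2* of_real (1-X1*X2-Y1*Y2))*(2*z3* of_real (a+c*X3))))*(2*A^3*(1+K)*z1 - C*(K*C^2+4*A^2-3*C^2)*(2* of_real X1*z1))"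
      using main by (simp only: q1 q2 q3 m12 m13 m23 s1 t1')
    show ?thesis unfolding eL eR using main2 by algebra
  qed
  hence "complex_of_real L = complex_of_real R" using nz1 nz2 nz3 by simp
  thus ?thesis unfolding L_def R_def using of_real_eq_iff by blast
qed

lemma sum_real:
  fixes X1 Y1 X2 Y2 X3 Y3 k g a c :: real
  assumes u1: "X1^2+Y1^2=1" and u2: "X2^2+Y2^2=1" and u3: "X3^2+Y3^2=1"
    and b12: "(1-k)*X1*X2 + (1+k)*Y1*Y2 = g" and b13: "(1-k)*X1*X3 + (1+k)*Y1*Y3 = g"
    and b23: "(1-k)*X2*X3 + (1+k)*Y2*Y3 = g"
    and d12: "(X1,Y1) \<noteq> (X2,Y2)" and d13: "(X1,Y1) \<noteq> (X3,Y3)" and d23: "(X2,Y2) \<noteq> (X3,Y3)"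
    and rel: "c^2*k^2 + 2*(2*a^2-c^2)*k - 3*c^2 = 0"
  shows "((a-c*X1)*(a-c*X2) + (a-c*X1)*(a-c*X3) + (a-c*X2)*(a-c*X3))*(2*k*a^2 - c^2*(k+1)) = 2*a*k*((a-c*X1)*(a-c*X2)*(a-c*X3))"
proof -
  define z1 where "z1 = Complex X1 Y1"
  define z2 where "z2 = Complex X2 Y2"
  define z3 where "z3 = Complex X3 Y3"
  define K where "K = complex_of_real k"
  define A where "A = complex_of_real a"
  define C where "C = complex_of_real c"
  have r12: "RelZ K (of_real g) z1 z2 = 0" unfolding z1_def z2_def K_def by (rule relR[OF u1 u2 b12])
  have r13: "RelZ K (of_real g) z1 z3 = 0" unfolding z1_def z3_def K_def by (rule relR[OF u1 u3 b13])
  have r23: "RelZ K (of_real g) z2 z3 = 0" unfolding z2_def z3_def K_def by (rule relR[OF u2 u3 b23])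
  have z12: "z1 \<noteq> z2" "z1 \<noteq> z3" "z2 \<noteq> z3" using d12 d13 d23 by (auto simp: z1_def z2_def z3_def)
  have nz1: "z1 \<noteq> 0" unfolding z1_def by (rule unit_nz[OF u1])
  have nz2: "z2 \<noteq> 0" unfolding z2_def by (rule unit_nz[OF u2])
  have nz3: "z3 \<noteq> 0" unfolding z3_def by (rule unit_nz[OF u3])
  note vt = vieta[OF r12 r13 r23 z12 nz1]
  have relc: "C^2*K^2 + 2*(2*A^2-C^2)*K - 3*C^2 = 0"
  proof -
    have "complex_of_real (c^2*k^2 + 2*(2*a^2-c^2)*k - 3*c^2) = 0" using rel by simp
    thus ?thesis by (simp add: A_def C_def K_def)
  qed
  have main: "(z1*(C*z2^2-2*A*z2+C)*(C*z3^2-2*A*z3+C) + z2*(C*z1^2-2*A*z1+C)*(C*z3^2-2*A*z3+C) + z3*(C*z1^2-2*A*z1+C)*(C*z2^2-2*A*z2+C))*(C^2*(K+1) - 2*K*A^2)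
     = A*K*((C*z1^2-2*A*z1+C)*(C*z2^2-2*A*z2+C)*(C*z3^2-2*A*z3+C))"
    by (rule sum_c[OF vt(1) vt(2) relc])
  have t1: "C*z1^2 - 2*A*z1 + C = -2*z1* of_real (a-c*X1)" unfolding z1_def A_def C_def by (rule qt_unit[OF u1])
  have t2: "C*z2^2 - 2*A*z2 + C = -2*z2* of_real (a-c*X2)" unfolding z2_def A_def C_def by (rule qt_unit[OF u2])
  have t3: "C*z3^2 - 2*A*z3 + C = -2*z3* of_real (a-c*X3)" unfolding z3_def A_def C_def by (rule qt_unit[OF u3])
  define L where "L = ((a-c*X1)*(a-c*X2) + (a-c*X1)*(a-c*X3) + (a-c*X2)*(a-c*X3))*(2*k*a^2 - c^2*(k+1))"
  define R where "R = 2*a*k*((a-c*X1)*(a-c*X2)*(a-c*X3))"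
  have "(complex_of_real L - complex_of_real R) * (z1*z2*z3) = 0"
  proof -
    have eL: "complex_of_real L = (of_real (a-c*X1)* of_real (a-c*X2) + of_real (a-c*X1)* of_real (a-c*X3) + of_real (a-c*X2)* of_real (a-c*X3))*(2*K*A^2 - C^2*(K+1))"
      unfolding L_def A_def C_def K_def by simp
    have eR: "complex_of_real R = 2*A*K*(of_real (a-c*X1)* of_real (a-c*X2)* of_real (a-c*X3))"
      unfolding R_def A_def K_def by simp
    show ?thesis unfolding eL eR using main t1 t2 t3 by algebra
  qed
  hence "complex_of_real L = complex_of_real R" using nz1 nz2 nz3 by simp
  thus ?thesis unfolding L_def R_def using of_real_eq_iff by blast
qed


definition mm :: "real \<Rightarrow> real \<Rightarrow> real \<times> real \<Rightarrow> real \<times> real \<Rightarrow> real" where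
  "mm a b P Q = 1 - (fst P/a)*(fst Q/a) - (snd P/b)*(snd Q/b)"

lemma ell_unit: assumes "a > 0" "b > 0" "on_ellipse a b P"
  shows "(fst P/a)^2 + (snd P/b)^2 = 1"
  using assms by (simp add: on_ellipse_def power_divide)

lemma unit_bounds: fixes X Y :: real assumes "X^2+Y^2 = 1" shows "-1 \<le> X" "X \<le> 1"
proof -
  have "X^2 \<le> 1" using assms by (smt (verit) zero_le_power2)
  thus "-1 \<le> X" "X \<le> 1" by (auto simp: abs_square_le_1 abs_le_iff)
qed

lemma dist_pt: fixes P Q :: "real \<times> real"
  shows "dist P Q = sqrt ((fst P - fst Q)^2 + (snd P - snd Q)^2)"
proof -
  have "dist P Q = dist (fst P, snd P) (fst Q, snd Q)" by simp
  also have "\<dots> = sqrt ((fst P - fst Q)^2 + (snd P - snd Q)^2)"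
    by (simp only: dist_Pair_Pair dist_real_def power2_abs)
  finally show ?thesis .
qed

lemma focal:
  assumes ab: "a > b" and b0: "b > 0" and E: "on_ellipse a b P"
  shows "dist P (- sqrt (a^2 - b^2), 0) = a + sqrt (a^2 - b^2) * (fst P / a)"
proof -
  define c where "c = sqrt (a^2 - b^2)"
  have a0: "a > 0" using ab b0 by simp
  have "b^2 < a^2" using ab b0 by (intro power_strict_mono) auto
  hence h0: "0 \<le> a^2 - b^2" by linarith
  hence c2: "c^2 = a^2 - b^2" unfolding c_def by simp
  have c0: "c \<ge> 0" unfolding c_def using h0 by simp
  have ca: "c < a" proof -
    have "c^2 < a^2" using c2 b0 by simp
    thus ?thesis using a0 c0 by (simp add: power_less_imp_less_base)
  qed
  define X where "X = fst P / a"
  define Y where "Y = snd P / b"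
  have u: "X^2 + Y^2 = 1" unfolding X_def Y_def by (rule ell_unit[OF a0 b0 E])
  have fx: "fst P = a * X" using a0 by (simp add: X_def)
  have fy: "snd P = b * Y" using b0 by (simp add: Y_def)
  have Xb: "-1 \<le> X" using unit_bounds[OF u] by simp
  have pos: "a + c * X > 0"
  proof -
    have "c * (-1) \<le> c * X" using Xb c0 by (rule mult_left_mono)
    hence "c * X \<ge> - c" by simp
    thus ?thesis using ca by simp
  qed
  have "(fst P - (- c))^2 + (snd P - 0)^2 = (a + c*X)^2"
    unfolding fx fy using u c2 by algebra
  hence "dist P (- c, 0) = sqrt ((a + c*X)^2)" by (simp add: dist_pt)
  also have "\<dots> = a + c*X" using pos by simp
  finally show ?thesis by (simp add: c_def X_def)
qed

lemma bis_lemma: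
  assumes a0: "a > 0" and b0: "b > 0" and EP: "on_ellipse a b P"
    and PQ: "P \<noteq> Q" and PR: "P \<noteq> R" and nb: "normal_bisects a b P Q R"
  shows "mm a b P Q / dist P Q = mm a b P R / dist P R"
proof -
  define n where "n = ell_normal a b P"
  have e1: "(fst P)^2/a^2 + (snd P)^2/b^2 = 1" using EP by (simp add: on_ellipse_def)
  have inner_eq: "inner n (S - P) = - mm a b P S" for S
  proof -
    have "inner n (S - P) = fst P/a^2 * (fst S - fst P) + snd P/b^2 * (snd S - snd P)"
      by (simp add: n_def ell_normal_def inner_prod_def)
    also have "\<dots> = (fst P/a)*(fst S/a) + (snd P/b)*(snd S/b) - ((fst P)^2/a^2 + (snd P)^2/b^2)"
      using a0 b0 by (simp add: field_simps power2_eq_square)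
    also have "\<dots> = - mm a b P S" unfolding e1 mm_def by simp
    finally show ?thesis .
  qed
  have nn: "norm n \<noteq> 0"
  proof
    assume "norm n = 0"
    hence "n = 0" by simp
    hence "fst P = 0" "snd P = 0" using a0 b0 by (auto simp: n_def ell_normal_def zero_prod_def)
    thus False using e1 by simp
  qed
  have "arccos (inner n (Q - P) / (norm n * norm (Q - P))) = arccos (inner n (R - P) / (norm n * norm (R - P)))"
    using nb by (simp add: normal_bisects_def vangle_def n_def)
  hence "inner n (Q - P) / (norm n * norm (Q - P)) = inner n (R - P) / (norm n * norm (R - P))"
    using cs_bound arccos_eq_iff by blast
  hence h: "- mm a b P Q / (norm n * dist P Q) = - mm a b P R / (norm n * dist P R)"
    by (simp add: inner_eq dist_norm norm_minus_commute)
  have "mm a b P Q / dist P Q = - norm n * (- mm a b P Q / (norm n * dist P Q))" using nn by simp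
  also have "\<dots> = - norm n * (- mm a b P R / (norm n * dist P R))" using h by simp
  also have "\<dots> = mm a b P R / dist P R" using nn by simp
  finally show ?thesis .
qed

lemma bilin:
  fixes X Y X' Y' jj sv a b c :: real
  assumes u: "X^2+Y^2=1" and u': "X'^2+Y'^2=1" and c2: "c^2 = a^2-b^2"
    and sd: "sv^2 = a^2*(X-X')^2 + b^2*(Y-Y')^2" and Js: "jj * sv = 1 - X*X' - Y*Y'" and m0: "1 - X*X' - Y*Y' \<noteq> 0"
  shows "(1-jj^2*c^2)*X*X' + (1+jj^2*c^2)*Y*Y' = 1 - jj^2*(a^2+b^2)"
proof -
  have "jj^2* sv^2 - (1 - X*X' - Y*Y')^2 = (1 - X*X' - Y*Y')*(((1-jj^2*c^2)*X*X' + (1+jj^2*c^2)*Y*Y') - (1 - jj^2*(a^2+b^2)))"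
    using u u' c2 sd by algebra
  moreover have "jj^2* sv^2 - (1 - X*X' - Y*Y')^2 = 0" using Js by (simp add: power_mult_distrib[symmetric])
  ultimately show ?thesis using m0 by simp
qed


lemma cosform:
  fixes r jj s12 s13 s23 d1 d2 d3 m12 m13 m23 :: real
  assumes "r > 0" "jj > 0" "d1 > 0" "d2 > 0" "d3 > 0" "m12 > 0" "m13 > 0" "m23 > 0"
    and "s12 = m12/jj" "s13 = m13/jj" "s23 = m23/jj"
  shows "((r* s12/(d1*d2))^2 + (r* s13/(d1*d3))^2 - (r* s23/(d2*d3))^2)/(2*(r* s12/(d1*d2))*(r* s13/(d1*d3)))
       = ((d2*m13)^2 + (d3*m12)^2 - (d1*m23)^2)/(2*((d2*m13)*(d3*m12)))"
  unfolding assms(9,10,11) using assms(1-8) by (simp add: field_simps power2_eq_square)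

lemma vcos:
  fixes x y e a N :: real
  assumes "x*e*2*a^2 = 2*y*N" "y \<noteq> 0" "e \<noteq> 0" "a \<noteq> 0"
  shows "x/(2*y) = N/(2*a^2*e)"
  using assms by (simp add: field_simps)

lemma pair_facts:
  assumes a0: "a > 0" and b0: "b > 0" and EP: "on_ellipse a b P" and EQ: "on_ellipse a b Q" and PQ: "P \<noteq> Q"
  shows "mm a b P Q > 0" "dist P Q > 0"
    "(dist P Q)^2 = a^2*(fst P/a - fst Q/a)^2 + b^2*(snd P/b - snd Q/b)^2"
    "(fst P/a, snd P/b) \<noteq> (fst Q/a, snd Q/b)"
    "mm a b P Q = 1 - (fst P/a)*(fst Q/a) - (snd P/b)*(snd Q/b)"
proof -
  have uP: "(fst P/a)^2 + (snd P/b)^2 = 1" by (rule ell_unit[OF a0 b0 EP])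
  have uQ: "(fst Q/a)^2 + (snd Q/b)^2 = 1" by (rule ell_unit[OF a0 b0 EQ])
  show nd: "(fst P/a, snd P/b) \<noteq> (fst Q/a, snd Q/b)"
  proof
    assume "(fst P/a, snd P/b) = (fst Q/a, snd Q/b)"
    hence "fst P = fst Q" "snd P = snd Q" using a0 b0 by (auto simp: divide_cancel_right)
    thus False using PQ by (simp add: prod_eq_iff)
  qed
  have "mm a b P Q = ((fst P/a - fst Q/a)^2 + (snd P/b - snd Q/b)^2)/2"
    unfolding mm_def using uP uQ by algebra
  moreover have "(fst P/a - fst Q/a)^2 + (snd P/b - snd Q/b)^2 > 0"
  proof -
    have "fst P/a - fst Q/a \<noteq> 0 \<or> snd P/b - snd Q/b \<noteq> 0" using nd by auto
    thus ?thesis by (auto simp: add_pos_nonneg add_nonneg_pos)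
  qed
  ultimately show "mm a b P Q > 0" by simp
  show "dist P Q > 0" using PQ by simp
  have "(dist P Q)^2 = (fst P - fst Q)^2 + (snd P - snd Q)^2" by (simp add: dist_pt)
  also have "\<dots> = a^2*(fst P/a - fst Q/a)^2 + b^2*(snd P/b - snd Q/b)^2"
    using a0 b0 by (simp add: field_simps power2_eq_square)
  finally show "(dist P Q)^2 = a^2*(fst P/a - fst Q/a)^2 + b^2*(snd P/b - snd Q/b)^2" .
  show "mm a b P Q = 1 - (fst P/a)*(fst Q/a) - (snd P/b)*(snd Q/b)" by (simp add: mm_def)
qed

lemma mm_sym: "mm a b P Q = mm a b Q P" by (simp add: mm_def mult.commute)


lemma final_alg:
  fixes a b c k e1 e2 e3 X1 X2 X3 \<delta> :: real
  assumes a0: "a > 0" and c0: "c > 0" and p1: "e1 > 0" and p2: "e2 > 0" and p3: "e3 > 0"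
    and c2: "c^2 = a^2 - b^2" and rel: "c^2*k^2 + 2*(2*a^2-c^2)*k - 3*c^2 = 0" and k0: "k > 0"
    and x1: "e1 = a - c*X1" and x2: "e2 = a - c*X2" and x3: "e3 = a - c*X3"
    and sr: "(e1*e2 + e1*e3 + e2*e3)*(2*k*a^2 - c^2*(k+1)) = 2*a*k*(e1*e2*e3)"
    and dd: "\<delta> = (k*c^2 + 2*a^2 - c^2)/2"
  shows "(a^3*(1+k) - c*(k*c^2+4*a^2-3*c^2)*X1)/(2*a^2*e1) + (a^3*(1+k) - c*(k*c^2+4*a^2-3*c^2)*X2)/(2*a^2*e2)
       + (a^3*(1+k) - c*(k*c^2+4*a^2-3*c^2)*X3)/(2*a^2*e3) = \<delta>*(a^2+c^2-\<delta>)/(a^2*c^2)"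
proof -
  define T where "T = k*c^2+4*a^2-3*c^2"
  define Dn where "Dn = 2*k*a^2 - c^2*(k+1)"
  have tm: "(a^3*(1+k) - c*(k*c^2+4*a^2-3*c^2)*X)/(2*a^2*e) = T/(2*a^2) + (k-3)*b^2/(2*a) * (1/e)"
    if "e = a - c*X" "e > 0" for X e
  proof -
    have cx: "c*X = a - e" using that(1) by simp
    have "a^3*(1+k) - c*(k*c^2+4*a^2-3*c^2)*X = a^3*(1+k) - T*(a - e)"
      unfolding T_def cx[symmetric] by (simp add: algebra_simps)
    thus ?thesis using that(2) a0 c2 unfolding T_def by (simp add: field_simps) algebra
  qed
  have pos: "e1*e2*e3 > 0" using p1 p2 p3 by simp
  have Dn0: "Dn \<noteq> 0"
  proof
    assume "Dn = 0"
    hence "2*a*k*(e1*e2*e3) = 0" using sr unfolding Dn_def by simp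
    thus False using a0 k0 p1 p2 p3 by simp
  qed
  have h2: "1/e1 + 1/e2 + 1/e3 = 2*a*k/Dn"
    using sr p1 p2 p3 Dn0 unfolding Dn_def by (simp add: field_simps)
  have an: "a \<noteq> 0" and cn: "c \<noteq> 0" using a0 c0 by auto
  have poly: "3*T*c^2*Dn + 2*a^2*c^2*(k-3)*b^2*k = 2*Dn*\<delta>*(a^2+c^2-\<delta>)"
    using rel c2 unfolding dd T_def Dn_def by algebra
  have h3: "3*T/(2*a^2) + (k-3)*b^2/(2*a) * (2*a*k/Dn) = \<delta>*(a^2+c^2-\<delta>)/(a^2*c^2)"
    using Dn0 an cn by (simp add: field_simps) (use poly in algebra)
  show ?thesis
    unfolding tm[OF x1 p1] tm[OF x2 p2] tm[OF x3 p3] h3[symmetric] h2[symmetric]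
    by (simp add: add_divide_distrib diff_divide_distrib algebra_simps)
qed


theorem mainTheorem7:
  fixes a b \<rho> :: real and P1 P2 P3 :: "real \<times> real"
  assumes "a > b" and "b > 0" and "\<rho> > 0"
    and "three_periodic a b P1 P2 P3"
  shows "let c = sqrt (a\<^sup>2 - b\<^sup>2);
             \<delta> = sqrt (a^4 - a\<^sup>2 * b\<^sup>2 + b^4);
             f1 = (- c, 0);
             Q1 = circ_inv f1 \<rho> P1; Q2 = circ_inv f1 \<rho> P2; Q3 = circ_inv f1 \<rho> P3
         in cos (tri_angle Q1 Q2 Q3) + cos (tri_angle Q2 Q3 Q1) + cos (tri_angle Q3 Q1 Q2)
            = \<delta> * (a\<^sup>2 + c\<^sup>2 - \<delta>) / (a\<^sup>2 * c\<^sup>2)"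
proof -
  note ab = assms(1) and b0 = assms(2) and rho0 = assms(3)
  have a0: "a > 0" using ab b0 by simp
  define c where "c = sqrt (a^2 - b^2)"
  define dl where "dl = sqrt (a^4 - a^2 * b^2 + b^4)"
  define f1 where "f1 = (- c, 0::real)"
  define Q1 where "Q1 = circ_inv f1 \<rho> P1"
  define Q2 where "Q2 = circ_inv f1 \<rho> P2"
  define Q3 where "Q3 = circ_inv f1 \<rho> P3"
  have "b^2 < a^2" using ab b0 by (intro power_strict_mono) auto
  hence h0: "0 < a^2 - b^2" by linarith
  hence c2: "c^2 = a^2 - b^2" unfolding c_def by simp
  have c0: "c > 0" unfolding c_def using h0 by simp
  have cn: "c \<noteq> 0" using c0 by simp
  have ca: "c < a"
  proof -
    have "c^2 < a^2" using c2 b0 by simp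
    thus ?thesis using a0 c0 by (simp add: power_less_imp_less_base)
  qed
  have E1: "on_ellipse a b P1" and E2: "on_ellipse a b P2" and E3: "on_ellipse a b P3"
    and n12: "P1 \<noteq> P2" and n23: "P2 \<noteq> P3" and n13: "P1 \<noteq> P3"
    and bis1: "normal_bisects a b P1 P2 P3" and bis2: "normal_bisects a b P2 P3 P1"
    using assms(4) unfolding three_periodic_def by auto
  have n21: "P2 \<noteq> P1" and n32: "P3 \<noteq> P2" and n31: "P3 \<noteq> P1" using n12 n23 n13 by auto
  define X1 where "X1 = fst P1 / a"
  define Y1 where "Y1 = snd P1 / b"
  have u1: "X1^2 + Y1^2 = 1" unfolding X1_def Y1_def by (rule ell_unit[OF a0 b0 E1])
  have fo1: "dist P1 f1 = a + c*X1" unfolding f1_def c_def X1_def by (rule focal[OF ab b0 E1])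
  have dp1: "a + c*X1 > 0" and ep1: "a - c*X1 > 0"
  proof -
    have "c * (-1) \<le> c * X1" using unit_bounds(1)[OF u1] c0 by (intro mult_left_mono) auto
    thus "a + c*X1 > 0" using ca by simp
    have "c * X1 \<le> c * 1" using unit_bounds(2)[OF u1] c0 by (intro mult_left_mono) auto
    thus "a - c*X1 > 0" using ca by simp
  qed
  have Pf1: "P1 \<noteq> f1" using fo1 dp1 by auto
  define X2 where "X2 = fst P2 / a"
  define Y2 where "Y2 = snd P2 / b"
  have u2: "X2^2 + Y2^2 = 1" unfolding X2_def Y2_def by (rule ell_unit[OF a0 b0 E2])
  have fo2: "dist P2 f1 = a + c*X2" unfolding f1_def c_def X2_def by (rule focal[OF ab b0 E2])
  have dp2: "a + c*X2 > 0" and ep2: "a - c*X2 > 0"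
  proof -
    have "c * (-1) \<le> c * X2" using unit_bounds(1)[OF u2] c0 by (intro mult_left_mono) auto
    thus "a + c*X2 > 0" using ca by simp
    have "c * X2 \<le> c * 1" using unit_bounds(2)[OF u2] c0 by (intro mult_left_mono) auto
    thus "a - c*X2 > 0" using ca by simp
  qed
  have Pf2: "P2 \<noteq> f1" using fo2 dp2 by auto
  define X3 where "X3 = fst P3 / a"
  define Y3 where "Y3 = snd P3 / b"
  have u3: "X3^2 + Y3^2 = 1" unfolding X3_def Y3_def by (rule ell_unit[OF a0 b0 E3])
  have fo3: "dist P3 f1 = a + c*X3" unfolding f1_def c_def X3_def by (rule focal[OF ab b0 E3])
  have dp3: "a + c*X3 > 0" and ep3: "a - c*X3 > 0"
  proof -
    have "c * (-1) \<le> c * X3" using unit_bounds(1)[OF u3] c0 by (intro mult_left_mono) auto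
    thus "a + c*X3 > 0" using ca by simp
    have "c * X3 \<le> c * 1" using unit_bounds(2)[OF u3] c0 by (intro mult_left_mono) auto
    thus "a - c*X3 > 0" using ca by simp
  qed
  have Pf3: "P3 \<noteq> f1" using fo3 dp3 by auto
  note pf12 = pair_facts[OF a0 b0 E1 E2 n12]
  have mm12: "mm a b P1 P2 = (1-X1*X2-Y1*Y2)" unfolding pf12(5) X1_def X2_def Y1_def Y2_def by simp
  have mp12: "(1-X1*X2-Y1*Y2) > 0" using pf12(1) mm12 by simp
  have dd12: "(X1,Y1) \<noteq> (X2,Y2)" using pf12(4) unfolding X1_def X2_def Y1_def Y2_def .
  have sq12: "(dist P1 P2)^2 = a^2*(X1-X2)^2 + b^2*(Y1-Y2)^2" using pf12(3) unfolding X1_def X2_def Y1_def Y2_def .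
  note pf13 = pair_facts[OF a0 b0 E1 E3 n13]
  have mm13: "mm a b P1 P3 = (1-X1*X3-Y1*Y3)" unfolding pf13(5) X1_def X3_def Y1_def Y3_def by simp
  have mp13: "(1-X1*X3-Y1*Y3) > 0" using pf13(1) mm13 by simp
  have dd13: "(X1,Y1) \<noteq> (X3,Y3)" using pf13(4) unfolding X1_def X3_def Y1_def Y3_def .
  have sq13: "(dist P1 P3)^2 = a^2*(X1-X3)^2 + b^2*(Y1-Y3)^2" using pf13(3) unfolding X1_def X3_def Y1_def Y3_def .
  note pf23 = pair_facts[OF a0 b0 E2 E3 n23]
  have mm23: "mm a b P2 P3 = (1-X2*X3-Y2*Y3)" unfolding pf23(5) X2_def X3_def Y2_def Y3_def by simp
  have mp23: "(1-X2*X3-Y2*Y3) > 0" using pf23(1) mm23 by simp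
  have dd23: "(X2,Y2) \<noteq> (X3,Y3)" using pf23(4) unfolding X2_def X3_def Y2_def Y3_def .
  have sq23: "(dist P2 P3)^2 = a^2*(X2-X3)^2 + b^2*(Y2-Y3)^2" using pf23(3) unfolding X2_def X3_def Y2_def Y3_def .
  note pf21 = pair_facts[OF a0 b0 E2 E1 n21]
  have mm21: "mm a b P2 P1 = (1-X2*X1-Y2*Y1)" unfolding pf21(5) X2_def X1_def Y2_def Y1_def by simp
  have mp21: "(1-X2*X1-Y2*Y1) > 0" using pf21(1) mm21 by simp
  have dd21: "(X2,Y2) \<noteq> (X1,Y1)" using pf21(4) unfolding X2_def X1_def Y2_def Y1_def .
  have sq21: "(dist P2 P1)^2 = a^2*(X2-X1)^2 + b^2*(Y2-Y1)^2" using pf21(3) unfolding X2_def X1_def Y2_def Y1_def .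
  note pf31 = pair_facts[OF a0 b0 E3 E1 n31]
  have mm31: "mm a b P3 P1 = (1-X3*X1-Y3*Y1)" unfolding pf31(5) X3_def X1_def Y3_def Y1_def by simp
  have mp31: "(1-X3*X1-Y3*Y1) > 0" using pf31(1) mm31 by simp
  have dd31: "(X3,Y3) \<noteq> (X1,Y1)" using pf31(4) unfolding X3_def X1_def Y3_def Y1_def .
  have sq31: "(dist P3 P1)^2 = a^2*(X3-X1)^2 + b^2*(Y3-Y1)^2" using pf31(3) unfolding X3_def X1_def Y3_def Y1_def .
  note pf32 = pair_facts[OF a0 b0 E3 E2 n32]
  have mm32: "mm a b P3 P2 = (1-X3*X2-Y3*Y2)" unfolding pf32(5) X3_def X2_def Y3_def Y2_def by simp
  have mp32: "(1-X3*X2-Y3*Y2) > 0" using pf32(1) mm32 by simp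
  have dd32: "(X3,Y3) \<noteq> (X2,Y2)" using pf32(4) unfolding X3_def X2_def Y3_def Y2_def .
  have sq32: "(dist P3 P2)^2 = a^2*(X3-X2)^2 + b^2*(Y3-Y2)^2" using pf32(3) unfolding X3_def X2_def Y3_def Y2_def .
  have r1: "mm a b P1 P2 / dist P1 P2 = mm a b P1 P3 / dist P1 P3" by (rule bis_lemma[OF a0 b0 E1 n12 n13 bis1])
  have r2: "mm a b P2 P3 / dist P2 P3 = mm a b P2 P1 / dist P2 P1" by (rule bis_lemma[OF a0 b0 E2 n23 n21 bis2])
  define J where "J = mm a b P1 P2 / dist P1 P2"
  have J0: "J > 0" unfolding J_def using pf12(1) pf12(2) by simp
  have Jr12: "J = mm a b P1 P2 / dist P1 P2" by (simp add: J_def)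
  have Jr13: "J = mm a b P1 P3 / dist P1 P3" using r1 by (simp add: J_def)
  have Jr21: "J = mm a b P2 P1 / dist P2 P1" by (simp add: J_def mm_sym dist_commute)
  have Jr23: "J = mm a b P2 P3 / dist P2 P3" using r2 Jr21 by simp
  have Jr31: "J = mm a b P3 P1 / dist P3 P1" using Jr13 by (simp add: mm_sym dist_commute)
  have Jr32: "J = mm a b P3 P2 / dist P3 P2" using Jr23 by (simp add: mm_sym dist_commute)
  have js12: "J * dist P1 P2 = (1-X1*X2-Y1*Y2)" using Jr12 pf12(2) unfolding mm12 by (simp add: field_simps)
  have ds12: "dist P1 P2 = (1-X1*X2-Y1*Y2) / J" using js12 J0 by (simp add: eq_divide_eq mult.commute)
  have js13: "J * dist P1 P3 = (1-X1*X3-Y1*Y3)" using Jr13 pf13(2) unfolding mm13 by (simp add: field_simps)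
  have ds13: "dist P1 P3 = (1-X1*X3-Y1*Y3) / J" using js13 J0 by (simp add: eq_divide_eq mult.commute)
  have js23: "J * dist P2 P3 = (1-X2*X3-Y2*Y3)" using Jr23 pf23(2) unfolding mm23 by (simp add: field_simps)
  have ds23: "dist P2 P3 = (1-X2*X3-Y2*Y3) / J" using js23 J0 by (simp add: eq_divide_eq mult.commute)
  have js21: "J * dist P2 P1 = (1-X2*X1-Y2*Y1)" using Jr21 pf21(2) unfolding mm21 by (simp add: field_simps)
  have ds21: "dist P2 P1 = (1-X2*X1-Y2*Y1) / J" using js21 J0 by (simp add: eq_divide_eq mult.commute)
  have js31: "J * dist P3 P1 = (1-X3*X1-Y3*Y1)" using Jr31 pf31(2) unfolding mm31 by (simp add: field_simps)
  have ds31: "dist P3 P1 = (1-X3*X1-Y3*Y1) / J" using js31 J0 by (simp add: eq_divide_eq mult.commute)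
  have js32: "J * dist P3 P2 = (1-X3*X2-Y3*Y2)" using Jr32 pf32(2) unfolding mm32 by (simp add: field_simps)
  have ds32: "dist P3 P2 = (1-X3*X2-Y3*Y2) / J" using js32 J0 by (simp add: eq_divide_eq mult.commute)
  define k where "k = J^2*c^2"
  define g where "g = 1 - J^2*(a^2+b^2)"
  have B12: "(1-k)*X1*X2 + (1+k)*Y1*Y2 = g"
    unfolding k_def g_def by (rule bilin[OF u1 u2 c2 sq12 js12]) (use mp12 in simp)
  have B13: "(1-k)*X1*X3 + (1+k)*Y1*Y3 = g"
    unfolding k_def g_def by (rule bilin[OF u1 u3 c2 sq13 js13]) (use mp13 in simp)
  have B23: "(1-k)*X2*X3 + (1+k)*Y2*Y3 = g"
    unfolding k_def g_def by (rule bilin[OF u2 u3 c2 sq23 js23]) (use mp23 in simp)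
  have B21: "(1-k)*X2*X1 + (1+k)*Y2*Y1 = g"
    unfolding k_def g_def by (rule bilin[OF u2 u1 c2 sq21 js21]) (use mp21 in simp)
  have B31: "(1-k)*X3*X1 + (1+k)*Y3*Y1 = g"
    unfolding k_def g_def by (rule bilin[OF u3 u1 c2 sq31 js31]) (use mp31 in simp)
  have B32: "(1-k)*X3*X2 + (1+k)*Y3*Y2 = g"
    unfolding k_def g_def by (rule bilin[OF u3 u2 c2 sq32 js32]) (use mp32 in simp)
  have cl: "2*g = k^2-1" by (rule closure_real[OF u1 u2 u3 B12 B13 B23 dd12 dd13 dd23])
  have rel: "c^2*k^2 + 2*(2*a^2-c^2)*k - 3*c^2 = 0"
  proof -
    have "2*(1 - J^2*(a^2+b^2)) = (J^2*c^2)^2 - 1" using cl by (simp add: k_def g_def)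
    thus ?thesis unfolding k_def using c2 by algebra
  qed
  have k0: "k > 0" unfolding k_def using J0 c0 by simp
  have k1: "k < 1"
  proof (rule ccontr)
    assume "\<not> k < 1"
    hence kk: "k \<ge> 1" by simp
    have e: "c^2*k^2 + 2*(2*a^2-c^2)*k - 3*c^2 = c^2*((k+3)*(k-1)) + (4*a^2*k - 4*c^2*k)" by algebra
    have "c^2*((k+3)*(k-1)) \<ge> 0" using kk by (intro mult_nonneg_nonneg) auto
    have ca2: "c^2 < a^2" using c2 b0 by simp
    have "4*c^2*k < 4*a^2*k" using ca2 k0 by simp
    moreover have "c^2*((k+3)*(k-1)) \<ge> 0" using kk by (intro mult_nonneg_nonneg) auto
    ultimately show False using rel e by linarith
  qed
  have k0': "0 \<le> k" using k0 by simp
  note V1 = vertex_real[OF u1 u2 u3 B12 B13 B23 dd12 dd13 dd23 rel cn k1 k0']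
  note V2 = vertex_real[OF u2 u3 u1 B23 B21 B31 dd23 dd21 dd31 rel cn k1 k0']
  note V3 = vertex_real[OF u3 u1 u2 B31 B32 B12 dd31 dd32 dd12 rel cn k1 k0']
  have rho2: "\<rho>^2 > 0" using rho0 by simp
  have cs1: "cos (tri_angle Q1 Q2 Q3) = (((a+c*X2)*(1-X1*X3-Y1*Y3))^2 + ((a+c*X3)*(1-X1*X2-Y1*Y2))^2 - ((a+c*X1)*(1-X2*X3-Y2*Y3))^2)/(2*(((a+c*X2)*(1-X1*X3-Y1*Y3))*((a+c*X3)*(1-X1*X2-Y1*Y2))))"
    unfolding cos_tri_angle Q1_def Q2_def Q3_def inv_dist[OF Pf1 Pf2] inv_dist[OF Pf1 Pf3] inv_dist[OF Pf2 Pf3] fo1 fo2 fo3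
    by (rule cosform[OF rho2 J0 dp1 dp2 dp3 mp12 mp13 mp23 ds12 ds13 ds23])
  have cs1': "cos (tri_angle Q1 Q2 Q3) = (a^3*(1+k) - c*(k*c^2+4*a^2-3*c^2)*X1)/(2*a^2*(a - c*X1))"
    unfolding cs1
    by (rule vcos[OF V1]) (use dp1 dp2 dp3 mp12 mp13 mp23 ep1 a0 in simp_all)
  have cs2: "cos (tri_angle Q2 Q3 Q1) = (((a+c*X3)*(1-X2*X1-Y2*Y1))^2 + ((a+c*X1)*(1-X2*X3-Y2*Y3))^2 - ((a+c*X2)*(1-X3*X1-Y3*Y1))^2)/(2*(((a+c*X3)*(1-X2*X1-Y2*Y1))*((a+c*X1)*(1-X2*X3-Y2*Y3))))"
    unfolding cos_tri_angle Q2_def Q3_def Q1_def inv_dist[OF Pf2 Pf3] inv_dist[OF Pf2 Pf1] inv_dist[OF Pf3 Pf1] fo2 fo3 fo1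
    by (rule cosform[OF rho2 J0 dp2 dp3 dp1 mp23 mp21 mp31 ds23 ds21 ds31])
  have cs2': "cos (tri_angle Q2 Q3 Q1) = (a^3*(1+k) - c*(k*c^2+4*a^2-3*c^2)*X2)/(2*a^2*(a - c*X2))"
    unfolding cs2
    by (rule vcos[OF V2]) (use dp2 dp3 dp1 mp23 mp21 mp31 ep2 a0 in simp_all)
  have cs3: "cos (tri_angle Q3 Q1 Q2) = (((a+c*X1)*(1-X3*X2-Y3*Y2))^2 + ((a+c*X2)*(1-X3*X1-Y3*Y1))^2 - ((a+c*X3)*(1-X1*X2-Y1*Y2))^2)/(2*(((a+c*X1)*(1-X3*X2-Y3*Y2))*((a+c*X2)*(1-X3*X1-Y3*Y1))))"
    unfolding cos_tri_angle Q3_def Q1_def Q2_def inv_dist[OF Pf3 Pf1] inv_dist[OF Pf3 Pf2] inv_dist[OF Pf1 Pf2] fo3 fo1 fo2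
    by (rule cosform[OF rho2 J0 dp3 dp1 dp2 mp31 mp32 mp12 ds31 ds32 ds12])
  have cs3': "cos (tri_angle Q3 Q1 Q2) = (a^3*(1+k) - c*(k*c^2+4*a^2-3*c^2)*X3)/(2*a^2*(a - c*X3))"
    unfolding cs3
    by (rule vcos[OF V3]) (use dp3 dp1 dp2 mp31 mp32 mp12 ep3 a0 in simp_all)
  have sr: "((a-c*X1)*(a-c*X2) + (a-c*X1)*(a-c*X3) + (a-c*X2)*(a-c*X3))*(2*k*a^2 - c^2*(k+1)) = 2*a*k*((a-c*X1)*(a-c*X2)*(a-c*X3))"
    by (rule sum_real[OF u1 u2 u3 B12 B13 B23 dd12 dd13 dd23 rel])
  have dlv: "dl = (k*c^2 + 2*a^2 - c^2)/2"
  proof -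
    have e4: "4*(a^4 - a^2 * b^2 + b^4) = (k*c^2 + 2*a^2 - c^2)^2" using rel c2 by algebra
    have e: "a^4 - a^2 * b^2 + b^4 = ((k*c^2 + 2*a^2 - c^2)/2)^2" using e4 by (simp add: power_divide)
    have p: "(k*c^2 + 2*a^2 - c^2)/2 > 0"
    proof -
      have "c^2 < a^2" using c2 b0 by simp
      moreover have "k*c^2 > 0" using k0 c0 by simp
      moreover have "a^2 > 0" using a0 by simp
      ultimately have "k*c^2 + 2*a^2 - c^2 > 0" by linarith
      thus ?thesis by simp
    qed
    show ?thesis unfolding dl_def e using p by simp
  qed
  have fin: "cos (tri_angle Q1 Q2 Q3) + cos (tri_angle Q2 Q3 Q1) + cos (tri_angle Q3 Q1 Q2) = dl * (a^2 + c^2 - dl) / (a^2 * c^2)"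
    unfolding cs1' cs2' cs3'
    by (rule final_alg[OF a0 c0 ep1 ep2 ep3 c2 rel k0 refl refl refl sr dlv])
  show ?thesis using fin unfolding Let_def c_def[symmetric] dl_def[symmetric] f1_def[symmetric] Q1_def[symmetric] Q2_def[symmetric] Q3_def[symmetric] .
qed

end
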